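(* Let $(\mathfrak g,\{e_1,\dots,e_n\})$ be a nice nilpotent Lie algebra with root matrix $M_\Delta\in\mathbb R^{m\times n}$, and let $b$ be a solution of $M_\Delta M_\Delta^Tb=[1]$. If $\delta\in(\mathbb Z_2)^n$ satisfies $M_{\Delta,2}\delta=0$, then $\mathfrak g$ has a diagonal nilsoliton metric of signature $\delta$ if and only if there exist $\lambda\in\mathbb R$ and a vector $X\in\mathbb R^m$ with all entries positive such that $X\in-2\lambda b+\ker M_\Delta^T$.
   Context: A nice Lie algebra is a Lie algebra with a basis $\{e_1,\dots,e_n\}$ (dual basis $\{e^i\}$) such that each $[e_i,e_j]$ is a multiple of some $e_k$ and each $e_i\lrcorner\, de^j$ is a multiple of some $e^k$ ($d$ the Chevalley–Eilenberg differential). The root matrix $M_\Delta$ has one row for each triple $(\{i,j\},k)$ such that $[e_i,e_j]$ is a nonzero multiple of $e_k$, with $+1$ in position $k$, $-1$ in positions $i,j$, $0$ elsewhere; $M_{\Delta,2}$ is its mod 2 reduction; $[1]$ is the all-ones vector. A diagonal metric is $\sum g_ie^i\otimes e^i$ with $g_i\neq 0$; its signature is $\delta$ with $\delta_i=0$ if $g_i>0$, $\delta_i=1$ if $g_i<0$. A nilsoliton metric is one whose Ricci operator satisfies $\operatorname{Ric}=\lambda\,\mathrm{id}+D$ with $\lambda\in\mathbb R$ and $D$ a derivation. *)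

theory Defs
  imports Main "HOL-Library.FuncSet" Complex_Main
begin

text \<open>A real Lie algebra of dimension n with a fixed basis e_0,...,e_(n-1) is encoded by
  its structure constants: [e_i,e_j] = sum_k c i j k e_k (indices < n).
  Vectors are functions nat => real, only the components < n matter.\<close>

type_synonym sconst = "nat \<Rightarrow> nat \<Rightarrow> nat \<Rightarrow> real"
type_synonym vec = "nat \<Rightarrow> real"

definition ev :: "nat \<Rightarrow> vec" where
  "ev i = (\<lambda>l. if l = i then 1 else 0)"

definition br :: "nat \<Rightarrow> sconst \<Rightarrow> vec \<Rightarrow> vec \<Rightarrow> vec" where
  "br n c v w = (\<lambda>k. \<Sum>i<n. \<Sum>j<n. v i * w j * c i j k)"

definition is_lie_algebra :: "nat \<Rightarrow> sconst \<Rightarrow> bool" where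
  "is_lie_algebra n c \<longleftrightarrow>
     (\<forall>i<n. \<forall>j<n. \<forall>k<n. c i j k = - c j i k) \<and>
     (\<forall>i<n. \<forall>j<n. \<forall>k<n. \<forall>m<n.
        (\<Sum>l<n. c i j l * c l k m + c j k l * c l i m + c k i l * c l j m) = 0)"

text \<open>Nice basis: each [e_i,e_j] is a multiple of some e_k, and each e_i \<lrcorner> de^j
  is a multiple of some e^k. Since (e_i \<lrcorner> de^j)(e_k) = - c i k j, the latter means
  that for fixed i, j at most one k has c i k j \<noteq> 0.\<close>
definition nice :: "nat \<Rightarrow> sconst \<Rightarrow> bool" where
  "nice n c \<longleftrightarrow>
     (\<forall>i<n. \<forall>j<n. \<forall>k<n. \<forall>k'<n. c i j k \<noteq> 0 \<longrightarrow> c i j k' \<noteq> 0 \<longrightarrow> k = k') \<and>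
     (\<forall>i<n. \<forall>j<n. \<forall>k<n. \<forall>k'<n. c i k j \<noteq> 0 \<longrightarrow> c i k' j \<noteq> 0 \<longrightarrow> k = k')"

text \<open>Nilpotent: the lower central series vanishes, i.e. for some N all iterated brackets
  [e_(i1),[e_(i2),...,[e_(iN), e_y]...]] of basis vectors vanish.\<close>
definition nilpotent_la :: "nat \<Rightarrow> sconst \<Rightarrow> bool" where
  "nilpotent_la n c \<longleftrightarrow>
     (\<exists>N. \<forall>is. length is = N \<longrightarrow> set is \<subseteq> {..<n} \<longrightarrow> (\<forall>y<n. \<forall>k<n.
         foldr (\<lambda>i v. br n c (ev i) v) is (ev y) k = 0))"

definition nice_nilpotent :: "nat \<Rightarrow> sconst \<Rightarrow> bool" where
  "nice_nilpotent n c \<longleftrightarrow> is_lie_algebra n c \<and> nice n c \<and> nilpotent_la n c"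

definition ip :: "nat \<Rightarrow> vec \<Rightarrow> vec \<Rightarrow> vec \<Rightarrow> real" where
  "ip n g u v = (\<Sum>i<n. g i * u i * v i)"

definition diag_metric :: "nat \<Rightarrow> vec \<Rightarrow> bool" where
  "diag_metric n g \<longleftrightarrow> (\<forall>i<n. g i \<noteq> 0)"

text \<open>Levi-Civita connection of the left-invariant metric (Koszul formula):
  2 <nabla_x y, z> = <[x,y],z> - <[y,z],x> + <[z,x],y>.\<close>
definition lc :: "nat \<Rightarrow> sconst \<Rightarrow> vec \<Rightarrow> vec \<Rightarrow> vec \<Rightarrow> vec" where
  "lc n c g x y = (\<lambda>l. (ip n g (br n c x y) (ev l) - ip n g (br n c y (ev l)) x
                        + ip n g (br n c (ev l) x) y) / (2 * g l))"

definition curv :: "nat \<Rightarrow> sconst \<Rightarrow> vec \<Rightarrow> vec \<Rightarrow> vec \<Rightarrow> vec \<Rightarrow> vec" where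
  "curv n c g x y z = (\<lambda>l. lc n c g x (lc n c g y z) l - lc n c g y (lc n c g x z) l
                           - lc n c g (br n c x y) z l)"

definition ric :: "nat \<Rightarrow> sconst \<Rightarrow> vec \<Rightarrow> vec \<Rightarrow> vec \<Rightarrow> real" where
  "ric n c g y z = (\<Sum>l<n. curv n c g (ev l) y z l)"

text \<open>Matrix of the Ricci operator Ric (defined by <Ric y, z> = ric(y,z)):
  entry (l,m) is the e_l-component of Ric e_m.\<close>
definition ricop :: "nat \<Rightarrow> sconst \<Rightarrow> vec \<Rightarrow> nat \<Rightarrow> nat \<Rightarrow> real" where
  "ricop n c g l m = ric n c g (ev m) (ev l) / g l"

definition mat_app :: "nat \<Rightarrow> (nat \<Rightarrow> nat \<Rightarrow> real) \<Rightarrow> vec \<Rightarrow> vec" where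
  "mat_app n D v = (\<lambda>l. \<Sum>m<n. D l m * v m)"

definition derivation :: "nat \<Rightarrow> sconst \<Rightarrow> (nat \<Rightarrow> nat \<Rightarrow> real) \<Rightarrow> bool" where
  "derivation n c D \<longleftrightarrow> (\<forall>i<n. \<forall>j<n. \<forall>k<n.
      mat_app n D (br n c (ev i) (ev j)) k
        = br n c (mat_app n D (ev i)) (ev j) k + br n c (ev i) (mat_app n D (ev j)) k)"

definition nilsoliton :: "nat \<Rightarrow> sconst \<Rightarrow> vec \<Rightarrow> bool" where
  "nilsoliton n c g \<longleftrightarrow> (\<exists>(lam::real) D. derivation n c D \<and>
      (\<forall>l<n. \<forall>m<n. ricop n c g l m = (if l = m then lam else 0) + D l m))"

text \<open>Signature \<delta> \<in> (Z_2)^n encoded as integers in {0,1}.\<close>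
definition has_signature :: "nat \<Rightarrow> vec \<Rightarrow> (nat \<Rightarrow> int) \<Rightarrow> bool" where
  "has_signature n g \<delta> \<longleftrightarrow> (\<forall>i<n. (g i > 0 \<longrightarrow> \<delta> i = 0) \<and> (g i < 0 \<longrightarrow> \<delta> i = 1))"

text \<open>The index set \<Delta> of rows of the root matrix: triples (i,j,k), i<j standing for
  ({i,j},k), with [e_i,e_j] a nonzero multiple of e_k. Vectors in R^m are functions on \<Delta>.\<close>
definition Delta :: "nat \<Rightarrow> sconst \<Rightarrow> (nat \<times> nat \<times> nat) set" where
  "Delta n c = {(i,j,k). i < j \<and> j < n \<and> k < n \<and> c i j k \<noteq> 0}"

definition root_entry :: "nat \<times> nat \<times> nat \<Rightarrow> nat \<Rightarrow> int" where
  "root_entry r l = (case r of (i,j,k) \<Rightarrow>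
      (if l = k then 1 else 0) - (if l = i then 1 else 0) - (if l = j then 1 else 0))"

definition rootT_app :: "nat \<Rightarrow> sconst \<Rightarrow> (nat \<times> nat \<times> nat \<Rightarrow> real) \<Rightarrow> nat \<Rightarrow> real" where
  "rootT_app n c y l = (\<Sum>r\<in>Delta n c. of_int (root_entry r l) * y r)"

definition root_app :: "nat \<Rightarrow> (nat \<Rightarrow> real) \<Rightarrow> nat \<times> nat \<times> nat \<Rightarrow> real" where
  "root_app n x r = (\<Sum>l<n. of_int (root_entry r l) * x l)"

definition root2_kills :: "nat \<Rightarrow> sconst \<Rightarrow> (nat \<Rightarrow> int) \<Rightarrow> bool" where
  "root2_kills n c \<delta> \<longleftrightarrow> (\<forall>r\<in>Delta n c. (\<Sum>l<n. root_entry r l * \<delta> l) mod 2 = 0)"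

end

theory Submission
  imports Defs "HOL-Analysis.Function_Topology"
begin

lemma sum_ev_left: "(\<Sum>i<n. ev a i * f i) = (if a < n then f a else 0)"
proof -
  have "(\<Sum>i<n. ev a i * f i) = (\<Sum>i<n. if i = a then f i else 0)"
    by (rule sum.cong) (auto simp: ev_def)
  then show ?thesis by simp
qed

lemma sum_ev_right: "(\<Sum>i<n. f i * ev a i) = (if a < n then f a else 0)"
  by (simp add: ev_def if_distrib cong: if_cong)

lemma br_ev_left: "a < n \<Longrightarrow> br n c (ev a) v k = (\<Sum>j<n. v j * c a j k)"
proof -
  assume a: "a < n"
  have "br n c (ev a) v k = (\<Sum>i<n. ev a i * (\<Sum>j<n. v j * c i j k))"
    unfolding br_def by (simp add: sum_distrib_left mult.assoc)
  also have "\<dots> = (\<Sum>j<n. v j * c a j k)" using a by (simp add: sum_ev_left)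
  finally show ?thesis .
qed

lemma br_ev_right: "b < n \<Longrightarrow> br n c v (ev b) k = (\<Sum>i<n. v i * c i b k)"
proof -
  assume a: "b < n"
  have "br n c v (ev b) k = (\<Sum>i<n. v i * (\<Sum>j<n. ev b j * c i j k))"
    unfolding br_def by (simp add: sum_distrib_left mult.assoc mult.left_commute)
  also have "\<dots> = (\<Sum>i<n. v i * c i b k)" using a by (simp add: sum_ev_left)
  finally show ?thesis .
qed

lemma br_ev_ev: "a < n \<Longrightarrow> b < n \<Longrightarrow> br n c (ev a) (ev b) k = c a b k"
  by (simp add: br_ev_left sum_ev_left)

definition GG :: "nat \<Rightarrow> sconst \<Rightarrow> vec \<Rightarrow> nat \<Rightarrow> nat \<Rightarrow> nat \<Rightarrow> real" where
  "GG n c g a b l = (g l * c a b l - g a * c b l a + g b * c l a b) / (2 * g l)"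

lemma lc_expand:
  assumes "l < n"
  shows "lc n c g x y l = (\<Sum>a<n. \<Sum>b<n. x a * y b * GG n c g a b l)"
proof -
  have 1: "ip n g (br n c x y) (ev l) = g l * (\<Sum>a<n. \<Sum>b<n. x a * y b * c a b l)"
    unfolding ip_def br_def using assms by (simp add: sum_ev_right)
  have 2: "ip n g (br n c y (ev l)) x = (\<Sum>a<n. \<Sum>b<n. x a * y b * (g a * c b l a))"
  proof -
    have "ip n g (br n c y (ev l)) x = (\<Sum>a<n. g a * (\<Sum>b<n. y b * c b l a) * x a)"
      unfolding ip_def using br_ev_right[OF assms] by simp
    also have "\<dots> = (\<Sum>a<n. \<Sum>b<n. x a * y b * (g a * c b l a))"
      by (simp add: sum_distrib_left sum_distrib_right mult_ac)
    finally show ?thesis .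
  qed
  have 3: "ip n g (br n c (ev l) x) y = (\<Sum>a<n. \<Sum>b<n. x a * y b * (g b * c l a b))"
  proof -
    have "ip n g (br n c (ev l) x) y = (\<Sum>b<n. g b * (\<Sum>a<n. x a * c l a b) * y b)"
      unfolding ip_def using br_ev_left[OF assms] by simp
    also have "\<dots> = (\<Sum>b<n. \<Sum>a<n. x a * y b * (g b * c l a b))"
      by (simp add: sum_distrib_left sum_distrib_right mult_ac)
    also have "\<dots> = (\<Sum>a<n. \<Sum>b<n. x a * y b * (g b * c l a b))"
      by (rule sum.swap)
    finally show ?thesis .
  qed
  have "lc n c g x y l = (\<Sum>a<n. \<Sum>b<n. x a * y b * (g l * c a b l - g a * c b l a + g b * c l a b)) / (2 * g l)"
    unfolding lc_def 1 2 3
    by (simp add: sum_distrib_left sum_subtractf[symmetric] sum.distrib[symmetric] algebra_simps)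
  also have "\<dots> = (\<Sum>a<n. \<Sum>b<n. x a * y b * GG n c g a b l)"
    unfolding GG_def by (simp add: sum_divide_distrib)
  finally show ?thesis .
qed

definition SS :: "nat \<Rightarrow> sconst \<Rightarrow> (nat \<Rightarrow> real) \<Rightarrow> nat \<Rightarrow> nat \<Rightarrow> nat \<Rightarrow> nat \<Rightarrow> real" where
  "SS n c g m l p q = GG n c g m l q * GG n c g p q p - GG n c g p l q * GG n c g m q p
      - c p m q * GG n c g q l p"

definition TT :: "sconst \<Rightarrow> (nat \<Rightarrow> real) \<Rightarrow> nat \<Rightarrow> nat \<Rightarrow> nat \<Rightarrow> nat \<Rightarrow> real" where
  "TT c g m l p q = - (1/2) * g q * c p l q * c p m q / g p
      + (1/4) * g l * g m * c q p l * c q p m / (g p * g q)"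

lemma pointwise_ident:
  assumes a1: "c l p q = - c p l q" and a2: "c q l p = - c l q p" and a3: "c p q l = - c q p l"
    and a4: "c q m p = - c m q p" and a5: "c p q m = - c q p m" and a6: "c m p q = - c p m q"
    and a7: "c q p p = - c p q p" and a8: "c p q q = - c q p q" and a9: "c p p q = 0" and a10: "c q q p = 0"
    and gp: "g p \<noteq> 0" and gq: "g q \<noteq> 0" and gl: "g l \<noteq> 0" and gm: "g m \<noteq> 0"
  shows "SS n c g m l p q + SS n c g m l q p = TT c g m l p q + TT c g m l q p
     + (c p l q * c m q p) / 2 + (c l q p * c p m q) / 2
     + GG n c g m l q * c p q p + GG n c g m l p * c q p q"
  unfolding SS_def TT_def GG_def
  using gp gq gl gm
  by (simp add: a1 a2 a3 a4 a5 a6 a7 a8 a9 a10 field_simps)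

abbreviation PT :: "nat set \<Rightarrow> (nat \<Rightarrow> real) topology" where
  "PT C \<equiv> product_topology (\<lambda>_. euclideanreal) C"

lemma box_compact: "compactin (PT C) (PiE C (\<lambda>_. {a..b::real}))"
  by (simp add: compactin_PiE)

lemma attains_min:
  assumes "compactin (PT C) K" "K \<noteq> {}" "continuous_map (PT C) euclideanreal f"
  shows "\<exists>x\<in>K. \<forall>y\<in>K. f x \<le> f y"
proof -
  have "compact (f ` K)" using image_compactin[OF assms(1) assms(3)] by simp
  then obtain m where "m \<in> f ` K" "\<forall>z\<in>f ` K. m \<le> z"
    using compact_attains_inf[of "f ` K"] assms(2) by auto
  then show ?thesis by auto
qed

lemma cont_lin:
  assumes "finite C"
  shows "continuous_map (PT C) euclideanreal (\<lambda>x. \<Sum>j\<in>C. A j * x j)"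
  using assms by (intro continuous_intros) auto

lemma cont_exp:
  assumes "continuous_map X euclideanreal f"
  shows "continuous_map X euclideanreal (\<lambda>x. exp (f x))"
proof -
  have "continuous_map euclideanreal euclideanreal exp"
    by (simp add: continuous_on_exp continuous_on_id)
  from continuous_map_compose[OF assms this] show ?thesis by (simp add: o_def)
qed

lemma injbound:
  fixes A :: "'r \<Rightarrow> nat \<Rightarrow> real"
  assumes fR: "finite R" and fC: "finite C"
    and indep: "\<forall>y. (\<forall>r\<in>R. (\<Sum>j\<in>C. A r j * y j) = 0) \<longrightarrow> (\<forall>j\<in>C. y j = 0)"
  shows "\<exists>c>0. \<forall>y. c * (\<Sum>j\<in>C. (y j)^2) \<le> (\<Sum>r\<in>R. (\<Sum>j\<in>C. A r j * y j)^2)"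
proof (cases "C = {}")
  case True
  then show ?thesis by (intro exI[of _ 1]) (simp add: sum_nonneg)
next
  case False
  then obtain k where k: "k \<in> C" by auto
  define sq where "sq = (\<lambda>y::nat\<Rightarrow>real. \<Sum>j\<in>C. (y j)^2)"
  define NN where "NN = (\<lambda>y::nat\<Rightarrow>real. \<Sum>r\<in>R. (\<Sum>j\<in>C. A r j * y j)^2)"
  have csq: "continuous_map (PT C) euclideanreal sq"
    unfolding sq_def using fC by (intro continuous_intros) auto
  have cNN: "continuous_map (PT C) euclideanreal NN"
    unfolding NN_def using fC fR by (intro continuous_intros) auto
  define S where "S = {y \<in> topspace (PT C). sq y \<in> {1}}"
  have clS: "closedin (PT C) S"
    unfolding S_def by (rule closedin_continuous_map_preimage[OF csq]) simp
  have Ssub: "S \<subseteq> PiE C (\<lambda>_. {-1..1})"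
  proof
    fix y assume y: "y \<in> S"
    then have yE: "y \<in> PiE C (\<lambda>_. UNIV)" and s1: "sq y = 1" by (auto simp: S_def)
    have "\<forall>j\<in>C. y j \<in> {-1..1}"
    proof
      fix j assume j: "j \<in> C"
      have "(y j)^2 \<le> sq y" unfolding sq_def
        using member_le_sum[of j C "\<lambda>j. (y j)^2"] j fC by auto
      then have "(y j)^2 \<le> 1^2" using s1 by simp
      then have "\<bar>y j\<bar> \<le> 1" using abs_le_square_iff by (metis abs_one)
      then show "y j \<in> {-1..1}" by auto
    qed
    then show "y \<in> PiE C (\<lambda>_. {-1..1})" using yE by (auto simp: PiE_iff)
  qed
  have cS: "compactin (PT C) S" by (rule closed_compactin[OF box_compact Ssub clS])
  define y0 where "y0 = restrict (\<lambda>j. if j = k then 1 else (0::real)) C"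
  have "sq y0 = 1"
  proof -
    have "sq y0 = (\<Sum>j\<in>C. if j = k then 1 else 0)"
      unfolding sq_def y0_def by (rule sum.cong) auto
    then show ?thesis using k fC by simp
  qed
  then have "y0 \<in> S" unfolding S_def y0_def by auto
  then have "S \<noteq> {}" by auto
  from attains_min[OF cS this cNN] obtain z where z: "z \<in> S" "\<forall>y\<in>S. NN z \<le> NN y" by auto
  have NNnn: "\<And>y. NN y \<ge> 0" unfolding NN_def by (simp add: sum_nonneg)
  have zpos: "NN z > 0"
  proof (rule ccontr)
    assume "\<not> NN z > 0"
    then have "NN z = 0" using NNnn[of z] by simp
    then have "\<forall>r\<in>R. (\<Sum>j\<in>C. A r j * z j)^2 = 0"
      unfolding NN_def using fR sum_nonneg_eq_0_iff[of R "\<lambda>r. (\<Sum>j\<in>C. A r j * z j)^2"] by simp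
    then have "\<forall>j\<in>C. z j = 0" using indep by simp
    then have "sq z = 0" unfolding sq_def by simp
    then show False using z(1) by (simp add: S_def)
  qed
  show ?thesis
  proof (intro exI[of _ "NN z"] conjI allI zpos)
    fix y
    show "NN z * (\<Sum>j\<in>C. (y j)^2) \<le> (\<Sum>r\<in>R. (\<Sum>j\<in>C. A r j * y j)^2)"
    proof (cases "sq y = 0")
      case True
      then show ?thesis using NNnn[of y] by (simp add: sq_def NN_def)
    next
      case False
      have sqnn: "sq y \<ge> 0" unfolding sq_def by (simp add: sum_nonneg)
      then have sp: "sq y > 0" using False by simp
      define t where "t = sqrt (sq y)"
      have tp: "t > 0" using sp by (simp add: t_def)
      have tt: "t^2 = sq y" using sqnn by (simp add: t_def)
      define y' where "y' = restrict (\<lambda>j. y j / t) C"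
      have "sq y' = sq y / t^2"
        unfolding sq_def y'_def by (simp add: power_divide sum_divide_distrib)
      then have "sq y' = 1" using tt sp by simp
      then have "y' \<in> S" unfolding S_def y'_def by auto
      then have le: "NN z \<le> NN y'" using z by auto
      have "NN y' = NN y / t^2"
      proof -
        have h: "\<And>r. (\<Sum>j\<in>C. A r j * y' j)^2 = (\<Sum>j\<in>C. A r j * y j)^2 / t^2"
        proof -
          fix r
          have "(\<Sum>j\<in>C. A r j * y' j) = (\<Sum>j\<in>C. A r j * y j) / t"
            unfolding y'_def by (simp add: sum_divide_distrib)
          then show "(\<Sum>j\<in>C. A r j * y' j)^2 = (\<Sum>j\<in>C. A r j * y j)^2 / t^2"
            by (simp add: power_divide)
        qed
        show ?thesis unfolding NN_def by (simp only: h sum_divide_distrib)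
      qed
      then have "NN z \<le> NN y / sq y" using le tt by simp
      then have "NN z * sq y \<le> NN y" using sp by (simp add: field_simps)
      then show ?thesis by (simp add: sq_def NN_def)
    qed
  qed
qed

lemma phi_bound:
  fixes a X u :: real
  assumes a: "a > 0" and X: "X > 0"
  shows "X * \<bar>u\<bar> - 2 * X * \<bar>ln (2 * X / a)\<bar> \<le> a * exp u - X * u"
proof -
  define s where "s = ln (2 * X / a)"
  have es: "exp s = 2 * X / a" using a X by (simp add: s_def)
  have "exp u = exp s * exp (u - s)" by (simp add: exp_diff)
  moreover have "1 + (u - s) \<le> exp (u - s)" by (rule exp_ge_add_one_self)
  ultimately have "exp s * (1 + (u - s)) \<le> exp u"
    by (metis exp_gt_zero mult_left_mono less_imp_le)
  then have t: "2 * X * (1 + (u - s)) \<le> a * exp u"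
    using a es by (simp add: field_simps)
  show ?thesis
  proof (cases "u \<ge> 0")
    case True
    have "s \<le> \<bar>s\<bar>" by simp
    then have e1: "2 * X * s \<le> 2 * X * \<bar>s\<bar>" using X by (intro mult_left_mono) auto
    from t have e2: "2 * X * u \<le> a * exp u + 2 * X * s - 2 * X" by (simp add: algebra_simps)
    have e3: "\<bar>u\<bar> = u" using True by simp
    show ?thesis unfolding s_def[symmetric] e3 using e1 e2 X by linarith
  next
    case False
    have e1: "a * exp u > 0" using a by simp
    have e2: "X * \<bar>s\<bar> \<ge> 0" using X by simp
    have e3: "\<bar>u\<bar> = - u" using False by simp
    show ?thesis unfolding s_def[symmetric] e3 using e1 e2 by linarith
  qed
qed

lemma indep_exist:
  fixes A :: "'r \<Rightarrow> nat \<Rightarrow> real" and a X :: "'r \<Rightarrow> real"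
  assumes fR: "finite R" and fC: "finite C"
    and indep: "\<forall>y. (\<forall>r\<in>R. (\<Sum>j\<in>C. A r j * y j) = 0) \<longrightarrow> (\<forall>j\<in>C. y j = 0)"
    and apos: "\<forall>r\<in>R. a r > 0" and Xpos: "\<forall>r\<in>R. X r > 0"
  shows "\<exists>x. \<forall>l\<in>C. (\<Sum>r\<in>R. A r l * (a r * exp (\<Sum>j\<in>C. A r j * x j))) = (\<Sum>r\<in>R. A r l * X r)"
proof -
  obtain c where c: "c > 0" "\<forall>y. c * (\<Sum>j\<in>C. (y j)^2) \<le> (\<Sum>r\<in>R. (\<Sum>j\<in>C. A r j * y j)^2)"
    using injbound[OF fR fC indep] by auto
  define u where "u = (\<lambda>r (x::nat\<Rightarrow>real). \<Sum>j\<in>C. A r j * x j)"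
  define F where "F = (\<lambda>x. \<Sum>r\<in>R. (a r * exp (u r x) - X r * u r x))"
  define K where "K = (\<lambda>r. 2 * X r * \<bar>ln (2 * X r / a r)\<bar>)"
  define F0 where "F0 = (\<Sum>r\<in>R. a r)"
  define Kt where "Kt = (\<Sum>r\<in>R. K r)"
  define Q where "Q = (\<Sum>r\<in>R. ((F0 + Kt) / X r)^2)"
  define \<rho> where "\<rho> = sqrt (Q / c) + 1"
  have Knn: "\<And>r. r \<in> R \<Longrightarrow> K r \<ge> 0" using Xpos unfolding K_def by auto
  have Qnn: "Q \<ge> 0" unfolding Q_def by (simp add: sum_nonneg)
  have rho_pos: "\<rho> > 0"
  proof -
    have "sqrt (Q / c) \<ge> 0" using Qnn c(1) by simp
    then show ?thesis unfolding \<rho>_def by linarith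
  qed
  have key: "\<And>x. F x \<le> F0 \<Longrightarrow> \<forall>j\<in>C. \<bar>x j\<bar> < \<rho>"
  proof -
    fix x assume Fx: "F x \<le> F0"
    have lb: "\<And>r. r \<in> R \<Longrightarrow> X r * \<bar>u r x\<bar> - K r \<le> a r * exp (u r x) - X r * u r x"
      unfolding K_def using phi_bound apos Xpos by auto
    have each: "\<And>r. r \<in> R \<Longrightarrow> X r * \<bar>u r x\<bar> \<le> F0 + Kt"
    proof -
      fix r assume r: "r \<in> R"
      have "(\<Sum>r'\<in>R. X r' * \<bar>u r' x\<bar> - K r') \<le> F x"
        unfolding F_def by (rule sum_mono) (rule lb)
      then have s1: "(\<Sum>r'\<in>R. X r' * \<bar>u r' x\<bar>) \<le> F0 + Kt"
        using Fx by (simp add: sum_subtractf Kt_def)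
      have nn: "\<forall>r'\<in>R. 0 \<le> X r' * \<bar>u r' x\<bar>" using Xpos by (simp add: less_imp_le)
      have "X r * \<bar>u r x\<bar> \<le> (\<Sum>r'\<in>R. X r' * \<bar>u r' x\<bar>)"
        by (rule member_le_sum) (use r fR nn in auto)
      then show "X r * \<bar>u r x\<bar> \<le> F0 + Kt" using s1 by simp
    qed
    have sq: "\<And>r. r \<in> R \<Longrightarrow> (u r x)^2 \<le> ((F0 + Kt) / X r)^2"
    proof -
      fix r assume r: "r \<in> R"
      have "\<bar>u r x\<bar> \<le> (F0 + Kt) / X r" using each[OF r] Xpos r by (simp add: field_simps)
      then show "(u r x)^2 \<le> ((F0 + Kt) / X r)^2"
        by (metis abs_ge_zero order_trans power2_abs power_mono)
    qed
    have "c * (\<Sum>j\<in>C. (x j)^2) \<le> Q"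
      using c(2)[rule_format, of x] sum_mono[of R "\<lambda>r. (u r x)^2" "\<lambda>r. ((F0 + Kt) / X r)^2"] sq
      unfolding Q_def u_def by auto
    then have sxq: "(\<Sum>j\<in>C. (x j)^2) \<le> Q / c" using c(1) by (simp add: field_simps)
    show "\<forall>j\<in>C. \<bar>x j\<bar> < \<rho>"
    proof
      fix j assume j: "j \<in> C"
      have "(x j)^2 \<le> (\<Sum>j\<in>C. (x j)^2)"
        using member_le_sum[of j C "\<lambda>j. (x j)^2"] j fC by auto
      then have "(x j)^2 \<le> Q / c" using sxq by simp
      then have "sqrt ((x j)^2) \<le> sqrt (Q / c)" by (rule real_sqrt_le_mono)
      then show "\<bar>x j\<bar> < \<rho>" unfolding \<rho>_def by simp
    qed
  qed
  define B where "B = PiE C (\<lambda>_. {-\<rho>..\<rho>})"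
  have cB: "compactin (PT C) B" unfolding B_def by (rule box_compact)
  define z0 where "z0 = restrict (\<lambda>_. 0::real) C"
  have z0B: "z0 \<in> B" unfolding z0_def B_def using rho_pos by auto
  have Fz0: "F z0 = F0" unfolding F_def F0_def u_def z0_def by simp
  have cF: "continuous_map (PT C) euclideanreal F"
    unfolding F_def u_def using fC fR
    by (intro continuous_intros cont_exp) auto
  from attains_min[OF cB _ cF] z0B obtain xs where xs: "xs \<in> B" "\<forall>y\<in>B. F xs \<le> F y" by auto
  have "F xs \<le> F0" using xs z0B Fz0 by metis
  then have inner: "\<forall>j\<in>C. \<bar>xs j\<bar> < \<rho>" by (rule key)
  show ?thesis
  proof (intro exI[of _ xs] ballI)
    fix l assume l: "l \<in> C"
    define h where "h = (\<lambda>t. F (xs(l := xs l + t)))"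
    have ush: "\<And>r t. u r (xs(l := xs l + t)) = u r xs + A r l * t"
    proof -
      fix r t
      have "u r (xs(l := xs l + t)) = (\<Sum>j\<in>C. A r j * xs j + (if j = l then A r l * t else 0))"
        unfolding u_def by (rule sum.cong) (auto simp: algebra_simps)
      also have "\<dots> = u r xs + A r l * t" unfolding u_def using l fC by (simp add: sum.distrib)
      finally show "u r (xs(l := xs l + t)) = u r xs + A r l * t" .
    qed
    have hform: "h = (\<lambda>t. \<Sum>r\<in>R. (a r * exp (u r xs + A r l * t) - X r * (u r xs + A r l * t)))"
      unfolding h_def F_def by (simp add: ush)
    have der: "(h has_real_derivative (\<Sum>r\<in>R. (a r * (exp (u r xs + A r l * 0) * (A r l)) - X r * A r l))) (at 0)"
      unfolding hform
      by (intro derivative_eq_intros DERIV_sum) (auto simp: algebra_simps)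
    define d where "d = \<rho> - \<bar>xs l\<bar>"
    have dpos: "d > 0" using inner l by (simp add: d_def)
    have "\<forall>t. \<bar>0 - t\<bar> < d \<longrightarrow> h 0 \<le> h t"
    proof (intro allI impI)
      fix t assume "\<bar>0 - t\<bar> < d"
      then have "\<bar>xs l + t\<bar> \<le> \<rho>" unfolding d_def by simp
      then have "xs(l := xs l + t) \<in> B" using xs(1) l unfolding B_def
        by (auto simp: PiE_iff abs_le_iff extensional_def)
      then have "F xs \<le> F (xs(l := xs l + t))" using xs(2) by auto
      then show "h 0 \<le> h t" unfolding h_def by simp
    qed
    from DERIV_local_min[OF der dpos this]
    have "(\<Sum>r\<in>R. (a r * (exp (u r xs) * (A r l)) - X r * A r l)) = 0" by simp
    then have "(\<Sum>r\<in>R. A r l * (a r * exp (u r xs))) - (\<Sum>r\<in>R. A r l * X r) = 0"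
      by (simp add: sum_subtractf[symmetric] algebra_simps)
    then show "(\<Sum>r\<in>R. A r l * (a r * exp (\<Sum>j\<in>C. A r j * xs j))) = (\<Sum>r\<in>R. A r l * X r)"
      unfolding u_def by simp
  qed
qed

lemma col_comb:
  fixes A :: "'r \<Rightarrow> nat \<Rightarrow> real"
  assumes "\<forall>r\<in>R. A r k = (\<Sum>j\<in>C'. \<beta> j * A r j)"
  shows "(\<Sum>r\<in>R. A r k * W r) = (\<Sum>j\<in>C'. \<beta> j * (\<Sum>r\<in>R. A r j * W r))"
proof -
  have "(\<Sum>r\<in>R. A r k * W r) = (\<Sum>r\<in>R. \<Sum>j\<in>C'. \<beta> j * (A r j * W r))"
    using assms by (intro sum.cong) (auto simp: sum_distrib_right mult.assoc)
  also have "\<dots> = (\<Sum>j\<in>C'. \<Sum>r\<in>R. \<beta> j * (A r j * W r))" by (rule sum.swap)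
  also have "\<dots> = (\<Sum>j\<in>C'. \<beta> j * (\<Sum>r\<in>R. A r j * W r))" by (simp add: sum_distrib_left)
  finally show ?thesis .
qed

lemma gen_exist:
  fixes A :: "'r \<Rightarrow> nat \<Rightarrow> real" and a X :: "'r \<Rightarrow> real"
  assumes fR: "finite R" and fC: "finite C"
    and apos: "\<forall>r\<in>R. a r > 0" and Xpos: "\<forall>r\<in>R. X r > 0"
  shows "\<exists>x. \<forall>l\<in>C. (\<Sum>r\<in>R. A r l * (a r * exp (\<Sum>j\<in>C. A r j * x j))) = (\<Sum>r\<in>R. A r l * X r)"
  using fC
proof (induction "card C" arbitrary: C rule: less_induct)
  case less
  show ?case
  proof (cases "\<forall>y. (\<forall>r\<in>R. (\<Sum>j\<in>C. A r j * y j) = 0) \<longrightarrow> (\<forall>j\<in>C. y j = 0)")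
    case True
    then show ?thesis using indep_exist[OF fR less.prems True apos Xpos] by blast
  next
    case False
    then obtain y k where y: "\<forall>r\<in>R. (\<Sum>j\<in>C. A r j * y j) = 0" and k: "k \<in> C" "y k \<noteq> 0" by auto
    define C' where "C' = C - {k}"
    have fC': "finite C'" using less.prems by (simp add: C'_def)
    have "card C' < card C" unfolding C'_def by (rule card_Diff1_less[OF less.prems k(1)])
    from less.hyps[OF this fC'] obtain x' where
      x': "\<forall>l\<in>C'. (\<Sum>r\<in>R. A r l * (a r * exp (\<Sum>j\<in>C'. A r j * x' j))) = (\<Sum>r\<in>R. A r l * X r)"
      by blast
    define x where "x = x'(k := 0)"
    have ux: "\<And>r. (\<Sum>j\<in>C. A r j * x j) = (\<Sum>j\<in>C'. A r j * x' j)"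
    proof -
      fix r
      have "(\<Sum>j\<in>C. A r j * x j) = A r k * x k + (\<Sum>j\<in>C'. A r j * x j)"
        unfolding C'_def using k less.prems by (simp add: sum.remove)
      also have "\<dots> = (\<Sum>j\<in>C'. A r j * x' j)"
        unfolding x_def C'_def by (auto intro: sum.cong)
      finally show "(\<Sum>j\<in>C. A r j * x j) = (\<Sum>j\<in>C'. A r j * x' j)" .
    qed
    have comb: "\<forall>r\<in>R. A r k = (\<Sum>j\<in>C'. (- y j / y k) * A r j)"
    proof
      fix r assume r: "r \<in> R"
      have "0 = A r k * y k + (\<Sum>j\<in>C'. A r j * y j)"
        using y r k less.prems unfolding C'_def by (simp add: sum.remove)
      then have "A r k = - (\<Sum>j\<in>C'. A r j * y j) / y k" using k(2) by (simp add: field_simps)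
      also have "\<dots> = (\<Sum>j\<in>C'. (- y j / y k) * A r j)"
        by (simp add: sum_divide_distrib sum_negf[symmetric] mult_ac)
      finally show "A r k = (\<Sum>j\<in>C'. (- y j / y k) * A r j)" .
    qed
    show ?thesis
    proof (intro exI[of _ x] ballI)
      fix l assume l: "l \<in> C"
      show "(\<Sum>r\<in>R. A r l * (a r * exp (\<Sum>j\<in>C. A r j * x j))) = (\<Sum>r\<in>R. A r l * X r)"
      proof (cases "l = k")
        case True
        have "(\<Sum>r\<in>R. A r k * (a r * exp (\<Sum>j\<in>C'. A r j * x' j)))
            = (\<Sum>j\<in>C'. (- y j / y k) * (\<Sum>r\<in>R. A r j * (a r * exp (\<Sum>j\<in>C'. A r j * x' j))))"
          by (rule col_comb[OF comb])
        also have "\<dots> = (\<Sum>j\<in>C'. (- y j / y k) * (\<Sum>r\<in>R. A r j * X r))"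
          using x' by (intro sum.cong) auto
        also have "\<dots> = (\<Sum>r\<in>R. A r k * X r)"
          by (rule col_comb[OF comb, symmetric])
        finally show ?thesis using True by (simp add: ux)
      next
        case False
        then have "l \<in> C'" using l by (simp add: C'_def)
        then show ?thesis using x' by (simp add: ux)
      qed
    qed
  qed
qed

lemma nn_anti: "nice_nilpotent n c \<Longrightarrow> i < n \<Longrightarrow> j < n \<Longrightarrow> k < n \<Longrightarrow> c i j k = - c j i k"
  unfolding nice_nilpotent_def is_lie_algebra_def by blast

lemma nn_nice1: "nice_nilpotent n c \<Longrightarrow> i < n \<Longrightarrow> j < n \<Longrightarrow> k < n \<Longrightarrow> k' < n
   \<Longrightarrow> c i j k \<noteq> 0 \<Longrightarrow> c i j k' \<noteq> 0 \<Longrightarrow> k = k'"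
  unfolding nice_nilpotent_def nice_def by blast

lemma nn_nice2: "nice_nilpotent n c \<Longrightarrow> i < n \<Longrightarrow> j < n \<Longrightarrow> k < n \<Longrightarrow> k' < n
   \<Longrightarrow> c i k j \<noteq> 0 \<Longrightarrow> c i k' j \<noteq> 0 \<Longrightarrow> k = k'"
  unfolding nice_nilpotent_def nice_def by blast

lemma no_walk:
  assumes nn: "nice_nilpotent n c" and fn: "\<forall>t. f t < n"
    and step: "\<forall>t. \<exists>j<n. c j (f t) (f (Suc t)) \<noteq> 0"
  shows False
proof -
  obtain N where nil: "\<forall>is. length is = N \<longrightarrow> set is \<subseteq> {..<n} \<longrightarrow> (\<forall>y<n. \<forall>k<n.
         foldr (\<lambda>i v. br n c (ev i) v) is (ev y) k = 0)"
    using nn unfolding nice_nilpotent_def nilpotent_la_def by blast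
  define J where "J t = (SOME j. j < n \<and> c j (f t) (f (Suc t)) \<noteq> 0)" for t
  have J: "J t < n \<and> c (J t) (f t) (f (Suc t)) \<noteq> 0" for t
    unfolding J_def using someI_ex[OF step[rule_format, of t]] by blast
  define P where "P t = (\<Prod>s<t. c (J s) (f s) (f (Suc s)))" for t
  define B where "B = (\<lambda>i v. br n c (ev i) v)"
  have claim: "\<forall>k<n. foldr B (rev (map J [0..<t])) (ev (f 0)) k = P t * ev (f t) k" for t
  proof (induction t)
    case 0
    then show ?case by (simp add: P_def)
  next
    case (Suc t)
    show ?case
    proof (intro allI impI)
      fix k assume k: "k < n"
      define V where "V = foldr B (rev (map J [0..<t])) (ev (f 0))"
      have "foldr B (rev (map J [0..<Suc t])) (ev (f 0)) k = br n c (ev (J t)) V k"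
        by (simp add: V_def B_def)
      also have "\<dots> = (\<Sum>j<n. V j * c (J t) j k)" using J[of t] by (simp add: br_ev_left)
      also have "\<dots> = (\<Sum>j<n. ev (f t) j * (P t * c (J t) j k))"
        using Suc.IH unfolding V_def by (intro sum.cong) auto
      also have "\<dots> = P t * c (J t) (f t) k" using fn by (simp add: sum_ev_left)
      also have "\<dots> = P (Suc t) * ev (f (Suc t)) k"
      proof (cases "c (J t) (f t) k = 0")
        case True
        then have "k \<noteq> f (Suc t)" using J[of t] by auto
        then show ?thesis using True by (simp add: ev_def)
      next
        case False
        then have "k = f (Suc t)" using nn_nice1[OF nn _ _ k _ False] J[of t] fn by blast
        then show ?thesis by (simp add: ev_def P_def)
      qed
      finally show "foldr B (rev (map J [0..<Suc t])) (ev (f 0)) k = P (Suc t) * ev (f (Suc t)) k" .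
    qed
  qed
  have "P N \<noteq> 0" unfolding P_def using J by simp
  moreover have "foldr B (rev (map J [0..<N])) (ev (f 0)) (f N) = P N"
    using claim[of N] fn by (simp add: ev_def)
  moreover have "foldr B (rev (map J [0..<N])) (ev (f 0)) (f N) = 0"
    using nil[rule_format, of "rev (map J [0..<N])" "f 0" "f N"] fn J unfolding B_def by auto
  ultimately show False by simp
qed

lemma nn_n1:
  assumes nn: "nice_nilpotent n c" and x: "x < n" and y: "y < n"
  shows "c x y x = 0"
proof (rule ccontr)
  assume h: "c x y x \<noteq> 0"
  have "c y x x \<noteq> 0" using nn_anti[OF nn x y x] h by simp
  then show False using no_walk[OF nn, of "\<lambda>_. x"] x y by auto
qed

lemma nn_cyc:
  assumes nn: "nice_nilpotent n c" and "x < n" "y < n" "z < n" "w < n"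
  shows "c z x y * c w y x = 0"
proof (rule ccontr)
  assume h: "c z x y * c w y x \<noteq> 0"
  define f where "f t = (if even t then x else y)" for t :: nat
  have "\<forall>t. \<exists>j<n. c j (f t) (f (Suc t)) \<noteq> 0"
  proof
    fix t show "\<exists>j<n. c j (f t) (f (Suc t)) \<noteq> 0"
      using h assms by (cases "even t") (auto simp: f_def)
  qed
  moreover have "\<forall>t. f t < n" using assms by (simp add: f_def)
  ultimately show False using no_walk[OF nn] by blast
qed

lemma lc_ev_left:
  assumes "a < n" "l < n"
  shows "lc n c g (ev a) y l = (\<Sum>b<n. y b * GG n c g a b l)"
proof -
  have "lc n c g (ev a) y l = (\<Sum>a'<n. ev a a' * (\<Sum>b<n. y b * GG n c g a' b l))"
    unfolding lc_expand[OF assms(2)] by (simp add: sum_distrib_left mult.assoc)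
  also have "\<dots> = (\<Sum>b<n. y b * GG n c g a b l)" using assms(1) by (simp add: sum_ev_left)
  finally show ?thesis .
qed

lemma lc_ev_right:
  assumes "b < n" "l < n"
  shows "lc n c g x (ev b) l = (\<Sum>a<n. x a * GG n c g a b l)"
proof -
  have "lc n c g x (ev b) l = (\<Sum>a<n. x a * (\<Sum>b'<n. ev b b' * GG n c g a b' l))"
    unfolding lc_expand[OF assms(2)] by (simp add: sum_distrib_left mult_ac)
  also have "\<dots> = (\<Sum>a<n. x a * GG n c g a b l)" using assms(1) by (simp add: sum_ev_left)
  finally show ?thesis .
qed

lemma lc_ev_ev: "a < n \<Longrightarrow> b < n \<Longrightarrow> l < n \<Longrightarrow> lc n c g (ev a) (ev b) l = GG n c g a b l"
  by (simp add: lc_ev_left sum_ev_left)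

lemma ric_SS:
  assumes m: "m < n" and l: "l < n"
  shows "ric n c g (ev m) (ev l) = (\<Sum>p<n. \<Sum>q<n. SS n c g m l p q)"
  unfolding ric_def
proof (rule sum.cong[OF refl])
  fix p assume "p \<in> {..<n}"
  then have p: "p < n" by simp
  have 1: "lc n c g (ev p) (lc n c g (ev m) (ev l)) p = (\<Sum>q<n. GG n c g m l q * GG n c g p q p)"
    using p m l by (simp add: lc_ev_left lc_ev_ev sum_ev_left)
  have 2: "lc n c g (ev m) (lc n c g (ev p) (ev l)) p = (\<Sum>q<n. GG n c g p l q * GG n c g m q p)"
    using p m l by (simp add: lc_ev_left lc_ev_ev sum_ev_left)
  have 3: "lc n c g (br n c (ev p) (ev m)) (ev l) p = (\<Sum>q<n. c p m q * GG n c g q l p)"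
    using p m l by (simp add: lc_ev_right br_ev_ev)
  show "curv n c g (ev p) (ev m) (ev l) p = (\<Sum>q<n. SS n c g m l p q)"
    unfolding curv_def SS_def 1 2 3 by (simp add: sum_subtractf)
qed

lemma ric_TT:
  assumes nn: "nice_nilpotent n c" and gnz: "\<forall>i<n. g i \<noteq> 0" and m: "m < n" and l: "l < n"
  shows "ric n c g (ev m) (ev l) = (\<Sum>p<n. \<Sum>q<n. TT c g m l p q)"
proof -
  have pw: "SS n c g m l p q + SS n c g m l q p = TT c g m l p q + TT c g m l q p"
    if p: "p < n" and q: "q < n" for p q
  proof -
    have z1: "c p l q * c m q p = 0"
      using nn_cyc[OF nn p q l m] nn_anti[OF nn p l q] by simp
    have z2: "c l q p * c p m q = 0"
      using nn_cyc[OF nn p q m l] nn_anti[OF nn p m q] by (simp add: mult.commute)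
    have z3: "c p q p = 0" by (rule nn_n1[OF nn p q])
    have z4: "c q p q = 0" by (rule nn_n1[OF nn q p])
    have a9: "c p p q = 0" using nn_anti[OF nn p p q] by simp
    have a10: "c q q p = 0" using nn_anti[OF nn q q p] by simp
    have "SS n c g m l p q + SS n c g m l q p = TT c g m l p q + TT c g m l q p
     + (c p l q * c m q p) / 2 + (c l q p * c p m q) / 2
     + GG n c g m l q * c p q p + GG n c g m l p * c q p q"
      by (rule pointwise_ident[OF nn_anti[OF nn l p q] nn_anti[OF nn q l p] nn_anti[OF nn p q l]
          nn_anti[OF nn q m p] nn_anti[OF nn p q m] nn_anti[OF nn m p q] nn_anti[OF nn q p p]
          nn_anti[OF nn p q q] a9 a10])
         (use gnz p q l m in auto)
    then show ?thesis using z1 z2 z3 z4 by simp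
  qed
  have sw: "(\<Sum>p<n. \<Sum>q<n. SS n c g m l p q) = (\<Sum>p<n. \<Sum>q<n. SS n c g m l q p)"
    by (rule sum.swap)
  have swT: "(\<Sum>p<n. \<Sum>q<n. TT c g m l p q) = (\<Sum>p<n. \<Sum>q<n. TT c g m l q p)"
    by (rule sum.swap)
  have "2 * (\<Sum>p<n. \<Sum>q<n. SS n c g m l p q)
      = (\<Sum>p<n. \<Sum>q<n. SS n c g m l p q + SS n c g m l q p)"
    using sw by (simp add: sum.distrib)
  also have "\<dots> = (\<Sum>p<n. \<Sum>q<n. TT c g m l p q + TT c g m l q p)"
    using pw by (intro sum.cong) auto
  also have "\<dots> = 2 * (\<Sum>p<n. \<Sum>q<n. TT c g m l p q)"
    using swT by (simp add: sum.distrib)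
  finally show ?thesis using ric_SS[OF m l] by simp
qed

definition Yg :: "sconst \<Rightarrow> (nat \<Rightarrow> real) \<Rightarrow> nat \<times> nat \<times> nat \<Rightarrow> real" where
  "Yg c g = (\<lambda>(i,j,k). (c i j k)^2 * g k / (g i * g j))"

lemma half_sum:
  fixes H :: "nat \<Rightarrow> nat \<Rightarrow> real"
  assumes sym: "\<And>i j. i < n \<Longrightarrow> j < n \<Longrightarrow> H i j = H j i" and diag: "\<And>i. i < n \<Longrightarrow> H i i = 0"
  shows "(\<Sum>i<n. \<Sum>j<n. if i < j then H i j else 0) = (1/2) * (\<Sum>i<n. \<Sum>j<n. H i j)"
proof -
  have pw: "H i j = (if i < j then H i j else 0) + (if j < i then H i j else 0)" if "i < n" "j < n" for i j
    using diag[of i] that by (cases i j rule: linorder_cases) auto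
  have "(\<Sum>i<n. \<Sum>j<n. H i j) = (\<Sum>i<n. \<Sum>j<n. (if i < j then H i j else 0) + (if j < i then H i j else 0))"
    using pw by (intro sum.cong) auto
  also have "\<dots> = (\<Sum>i<n. \<Sum>j<n. if i < j then H i j else 0) + (\<Sum>i<n. \<Sum>j<n. if j < i then H i j else 0)"
    by (simp add: sum.distrib)
  also have "(\<Sum>i<n. \<Sum>j<n. if j < i then H i j else 0) = (\<Sum>j<n. \<Sum>i<n. if j < i then H i j else 0)"
    by (rule sum.swap)
  also have "\<dots> = (\<Sum>j<n. \<Sum>i<n. if j < i then H j i else 0)"
    using sym by (intro sum.cong) auto
  finally show ?thesis by simp
qed

lemma root_entry_mult:
  "of_int (root_entry (i,j,k) l) * (y::real) = (if k = l then y else 0) - (if i = l then y else 0) - (if j = l then y else 0)"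
  by (auto simp: root_entry_def)

lemma rootT_Yg:
  assumes nn: "nice_nilpotent n c" and l: "l < n"
  shows "rootT_app n c (Yg c g) l = (1/2) * (\<Sum>i<n. \<Sum>j<n. Yg c g (i,j,l)) - (\<Sum>j<n. \<Sum>k<n. Yg c g (l,j,k))"
proof -
  define h where "h = (\<lambda>r. of_int (root_entry r l) * Yg c g r)"
  define S where "S = {r \<in> {..<n} \<times> {..<n} \<times> {..<n}. fst r < fst (snd r)}"
  have fS: "finite S" unfolding S_def by simp
  have DS: "Delta n c \<subseteq> S" unfolding Delta_def S_def by auto
  have z: "\<forall>r\<in>S - Delta n c. h r = 0"
    unfolding S_def Delta_def h_def Yg_def by auto
  have "rootT_app n c (Yg c g) l = sum h (Delta n c)" unfolding rootT_app_def h_def by simp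
  also have "\<dots> = sum h S" by (rule sum.mono_neutral_left[OF fS DS z])
  also have "\<dots> = (\<Sum>r\<in>{..<n} \<times> {..<n} \<times> {..<n}. if fst r < fst (snd r) then h r else 0)"
    unfolding S_def by (simp add: sum.inter_filter)
  also have "\<dots> = (\<Sum>i<n. \<Sum>j<n. \<Sum>k<n. if i < j then h (i,j,k) else 0)"
    by (simp add: sum.cartesian_product split_def) (intro sum.cong refl, auto)
  also have "\<dots> = (\<Sum>i<n. \<Sum>j<n. if i < j then (\<Sum>k<n. h (i,j,k)) else 0)"
    by (intro sum.cong) auto
  also have "\<dots> = (1/2) * (\<Sum>i<n. \<Sum>j<n. \<Sum>k<n. h (i,j,k))"
  proof (rule half_sum)
    fix i j assume ij: "i < n" "j < n"
    have sq: "(c j i k)^2 = (c i j k)^2" if "k < n" for k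
      using nn_anti[OF nn ij(2) ij(1) that] by simp
    show "(\<Sum>k<n. h (i,j,k)) = (\<Sum>k<n. h (j,i,k))"
      unfolding h_def Yg_def root_entry_def
      by (intro sum.cong refl) (simp add: sq mult_ac)
  next
    fix i assume "i < n"
    then have "c i i k = 0" if "k < n" for k
      using nn_anti[OF nn \<open>i < n\<close> \<open>i < n\<close> that] by simp
    then show "(\<Sum>k<n. h (i,i,k)) = 0"
      unfolding h_def Yg_def by simp
  qed
  also have "(\<Sum>i<n. \<Sum>j<n. \<Sum>k<n. h (i,j,k)) =
      (\<Sum>i<n. \<Sum>j<n. Yg c g (i,j,l)) - (\<Sum>j<n. \<Sum>k<n. Yg c g (l,j,k)) - (\<Sum>i<n. \<Sum>k<n. Yg c g (i,l,k))"
  proof -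
    have "(\<Sum>i<n. \<Sum>j<n. \<Sum>k<n. h (i,j,k)) = (\<Sum>i<n. \<Sum>j<n. \<Sum>k<n.
        (if k = l then Yg c g (i,j,k) else 0) - (if i = l then Yg c g (i,j,k) else 0) - (if j = l then Yg c g (i,j,k) else 0))"
      unfolding h_def root_entry_mult by simp
    also have "\<dots> = (\<Sum>i<n. \<Sum>j<n. Yg c g (i,j,l)) - (\<Sum>i<n. if i = l then (\<Sum>j<n. \<Sum>k<n. Yg c g (i,j,k)) else 0)
        - (\<Sum>i<n. \<Sum>j<n. if j = l then (\<Sum>k<n. Yg c g (i,j,k)) else 0)"
    proof -
      have e1: "(\<Sum>k<n. if k = l then Yg c g (i,j,k) else 0) = Yg c g (i,j,l)" for i j
        using l by simp
      have e2: "(\<Sum>j<n. \<Sum>k<n. if i = l then Yg c g (i,j,k) else 0) = (if i = l then (\<Sum>j<n. \<Sum>k<n. Yg c g (i,j,k)) else 0)" for i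
        by (cases "i = l") auto
      have e3: "(\<Sum>k<n. if j = l then Yg c g (i,j,k) else 0) = (if j = l then (\<Sum>k<n. Yg c g (i,j,k)) else 0)" for i j
        by (cases "j = l") auto
      show ?thesis by (simp only: sum_subtractf e1 e2 e3)
    qed
    also have "(\<Sum>i<n. if i = l then (\<Sum>j<n. \<Sum>k<n. Yg c g (i,j,k)) else 0) = (\<Sum>j<n. \<Sum>k<n. Yg c g (l,j,k))"
      using l by simp
    also have "(\<Sum>i<n. \<Sum>j<n. if j = l then (\<Sum>k<n. Yg c g (i,j,k)) else 0) = (\<Sum>i<n. \<Sum>k<n. Yg c g (i,l,k))"
      using l by simp
    finally show ?thesis .
  qed
  also have "(\<Sum>i<n. \<Sum>k<n. Yg c g (i,l,k)) = (\<Sum>i<n. \<Sum>k<n. Yg c g (l,i,k))"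
  proof (intro sum.cong refl)
    fix i k assume "i \<in> {..<n}" "k \<in> {..<n}"
    then have "(c i l k)^2 = (c l i k)^2" using nn_anti[OF nn _ l, of i k] by simp
    then show "Yg c g (i,l,k) = Yg c g (l,i,k)" unfolding Yg_def by (simp add: mult_ac)
  qed
  finally show ?thesis by (simp add: algebra_simps)
qed

lemma ricop_formula:
  assumes nn: "nice_nilpotent n c" and gnz: "\<forall>i<n. g i \<noteq> 0" and l: "l < n" and m: "m < n"
  shows "ricop n c g l m = (if l = m then rootT_app n c (Yg c g) l / 2 else 0)"
proof -
  have r: "ricop n c g l m = (\<Sum>p<n. \<Sum>q<n. TT c g m l p q / g l)"
    unfolding ricop_def ric_TT[OF nn gnz m l] by (simp add: sum_divide_distrib)
  show ?thesis
  proof (cases "l = m")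
    case False
    have "TT c g m l p q = 0" if p: "p < n" and q: "q < n" for p q
    proof -
      have z1: "c p l q * c p m q = 0"
        using nn_nice2[OF nn p q l m] False by auto
      have z2: "c q p l * c q p m = 0"
        using nn_nice1[OF nn q p l m] False by auto
      show ?thesis unfolding TT_def by (simp add: mult.assoc z1 z2)
    qed
    then show ?thesis using r False by simp
  next
    case True
    have pw: "TT c g l l p q / g l = - (1/2) * Yg c g (l,p,q) + (1/4) * Yg c g (q,p,l)"
      if p: "p < n" and q: "q < n" for p q
    proof -
      have a: "c p l q = - c l p q" using nn_anti[OF nn p l q] .
      have gp: "g p \<noteq> 0" and gq: "g q \<noteq> 0" and gl: "g l \<noteq> 0" using gnz p q l by auto
      show ?thesis unfolding TT_def Yg_def using gp gq gl
        by (simp add: a field_simps power2_eq_square)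
    qed
    have "ricop n c g l m = (\<Sum>p<n. \<Sum>q<n. - (1/2) * Yg c g (l,p,q) + (1/4) * Yg c g (q,p,l))"
      using r True pw by simp
    also have "\<dots> = - (1/2) * (\<Sum>p<n. \<Sum>q<n. Yg c g (l,p,q)) + (1/4) * (\<Sum>p<n. \<Sum>q<n. Yg c g (q,p,l))"
      by (simp only: sum.distrib sum_distrib_left)
    also have "(\<Sum>p<n. \<Sum>q<n. Yg c g (q,p,l)) = (\<Sum>q<n. \<Sum>p<n. Yg c g (q,p,l))"
      by (rule sum.swap)
    finally show ?thesis using True rootT_Yg[OF nn l, of g] by simp
  qed
qed

lemma root_app_triple:
  assumes "i < n" "j < n" "k < n"
  shows "root_app n x (i,j,k) = x k - x i - x j"
proof -
  have "root_app n x (i,j,k) = (\<Sum>l<n. (if k = l then x l else 0) - (if i = l then x l else 0) - (if j = l then x l else 0))"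
    unfolding root_app_def root_entry_mult by simp
  also have "\<dots> = x k - x i - x j" using assms by (simp add: sum_subtractf)
  finally show ?thesis .
qed

lemma root_int_triple:
  fixes f :: "nat \<Rightarrow> int"
  assumes "i < n" "j < n" "k < n"
  shows "(\<Sum>l<n. root_entry (i,j,k) l * f l) = f k - f i - f j"
proof -
  have "(\<Sum>l<n. root_entry (i,j,k) l * f l) = (\<Sum>l<n. (if k = l then f l else 0) - (if i = l then f l else 0) - (if j = l then f l else 0))"
    by (intro sum.cong) (auto simp: root_entry_def)
  also have "\<dots> = f k - f i - f j" using assms by (simp add: sum_subtractf)
  finally show ?thesis .
qed

lemma Delta_mem: "(i,j,k) \<in> Delta n c \<longleftrightarrow> i < j \<and> j < n \<and> k < n \<and> c i j k \<noteq> 0"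
  by (simp add: Delta_def)

lemma finite_Delta: "finite (Delta n c)"
proof -
  have "Delta n c \<subseteq> {..<n} \<times> {..<n} \<times> {..<n}" by (auto simp: Delta_def)
  then show ?thesis by (rule finite_subset) simp
qed

lemma rootT_lin: "rootT_app n c (\<lambda>r. X r + t * b r) l = rootT_app n c X l + t * rootT_app n c b l"
  unfolding rootT_app_def by (simp add: sum.distrib sum_distrib_left algebra_simps)

lemma quad:
  assumes "\<forall>r\<in>Delta n c. root_app n (rootT_app n c Z) r = 0"
  shows "\<forall>l<n. rootT_app n c Z l = 0"
proof -
  have "(\<Sum>l<n. (rootT_app n c Z l)^2) = (\<Sum>l<n. rootT_app n c Z l * (\<Sum>r\<in>Delta n c. of_int (root_entry r l) * Z r))"
    unfolding rootT_app_def by (simp add: power2_eq_square)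
  also have "\<dots> = (\<Sum>l<n. \<Sum>r\<in>Delta n c. Z r * (of_int (root_entry r l) * rootT_app n c Z l))"
    by (simp add: sum_distrib_left mult_ac)
  also have "\<dots> = (\<Sum>r\<in>Delta n c. \<Sum>l<n. Z r * (of_int (root_entry r l) * rootT_app n c Z l))"
    by (rule sum.swap)
  also have "\<dots> = (\<Sum>r\<in>Delta n c. Z r * root_app n (rootT_app n c Z) r)"
    unfolding root_app_def by (simp add: sum_distrib_left)
  also have "\<dots> = 0" using assms by simp
  finally have "(\<Sum>l<n. (rootT_app n c Z l)^2) = 0" .
  then show ?thesis using sum_nonneg_eq_0_iff[of "{..<n}" "\<lambda>l. (rootT_app n c Z l)^2"] by simp
qed

lemma diag_deriv:
  assumes D: "\<forall>l<n. \<forall>m<n. D l m = (if l = m then d l else 0)"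
  shows "derivation n c D \<longleftrightarrow> (\<forall>i<n. \<forall>j<n. \<forall>k<n. d k * c i j k = d i * c i j k + d j * c i j k)"
proof -
  have e1: "mat_app n D (br n c (ev i) (ev j)) k = d k * c i j k" if "i < n" "j < n" "k < n" for i j k
  proof -
    have "mat_app n D (br n c (ev i) (ev j)) k = (\<Sum>m<n. D k m * c i j m)"
      unfolding mat_app_def using that by (simp add: br_ev_ev)
    also have "\<dots> = (\<Sum>m<n. if m = k then d k * c i j m else 0)"
      using D that by (intro sum.cong) auto
    finally show ?thesis using that by simp
  qed
  have col: "mat_app n D (ev i) a = D a i" if "i < n" for i a
    unfolding mat_app_def using that by (simp add: sum_ev_right)
  have e2: "br n c (mat_app n D (ev i)) (ev j) k = d i * c i j k" if "i < n" "j < n" "k < n" for i j k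
  proof -
    have "br n c (mat_app n D (ev i)) (ev j) k = (\<Sum>a<n. D a i * c a j k)"
      using that by (simp add: br_ev_right col)
    also have "\<dots> = (\<Sum>a<n. if a = i then d i * c a j k else 0)"
      using D that by (intro sum.cong) auto
    finally show ?thesis using that by simp
  qed
  have e3: "br n c (ev i) (mat_app n D (ev j)) k = d j * c i j k" if "i < n" "j < n" "k < n" for i j k
  proof -
    have "br n c (ev i) (mat_app n D (ev j)) k = (\<Sum>b<n. D b j * c i b k)"
      using that by (simp add: br_ev_left col)
    also have "\<dots> = (\<Sum>b<n. if b = j then d j * c i b k else 0)"
      using D that by (intro sum.cong) auto
    finally show ?thesis using that by simp
  qed
  show ?thesis unfolding derivation_def using e1 e2 e3 by auto
qed

lemma parity_cases:
  fixes di dj dk :: int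
  assumes "di \<in> {0,1}" "dj \<in> {0,1}" "dk \<in> {0,1}" "(dk - di - dj) mod 2 = 0"
  shows "(di = 0 \<and> dj = 0 \<and> dk = 0) \<or> (di = 1 \<and> dj = 1 \<and> dk = 0) \<or>
         (di = 1 \<and> dj = 0 \<and> dk = 1) \<or> (di = 0 \<and> dj = 1 \<and> dk = 1)"
  using assms by auto

lemma sign_ratio:
  fixes gi gj gk :: real and di dj dk :: int
  assumes "di \<in> {0,1}" "dj \<in> {0,1}" "dk \<in> {0,1}" "(dk - di - dj) mod 2 = 0"
    and "di = 0 \<Longrightarrow> gi > 0" "di = 1 \<Longrightarrow> gi < 0"
    and "dj = 0 \<Longrightarrow> gj > 0" "dj = 1 \<Longrightarrow> gj < 0"
    and "dk = 0 \<Longrightarrow> gk > 0" "dk = 1 \<Longrightarrow> gk < 0"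
  shows "gk / (gi * gj) > 0"
  using parity_cases[OF assms(1-4)] assms(5-10)
  by (auto simp: zero_less_divide_iff zero_less_mult_iff mult_less_0_iff)

lemma sign_mult:
  fixes di dj dk :: int
  assumes "di \<in> {0,1}" "dj \<in> {0,1}" "dk \<in> {0,1}" "(dk - di - dj) mod 2 = 0"
  shows "(if dk = 0 then 1 else -1::real) = (if di = 0 then 1 else -1) * (if dj = 0 then 1 else -1)"
  using parity_cases[OF assms] by auto

theorem corollary1p17:
  fixes n :: nat and c :: sconst
    and b :: "nat \<times> nat \<times> nat \<Rightarrow> real" and \<delta> :: "nat \<Rightarrow> int"
  assumes "nice_nilpotent n c"
    and "\<forall>r\<in>Delta n c. root_app n (rootT_app n c b) r = 1"
    and "\<forall>i<n. \<delta> i \<in> {0, 1}"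
    and "root2_kills n c \<delta>"
  shows "(\<exists>g. diag_metric n g \<and> has_signature n g \<delta> \<and> nilsoliton n c g) \<longleftrightarrow>
         (\<exists>(lam::real) (X :: nat \<times> nat \<times> nat \<Rightarrow> real).
            (\<forall>r\<in>Delta n c. X r > 0) \<and>
            (\<forall>l<n. rootT_app n c (\<lambda>r. X r + 2 * lam * b r) l = 0))"
proof -
  note nn = assms(1)
  have hb: "rootT_app n c b k - rootT_app n c b i - rootT_app n c b j = 1"
    if "(i,j,k) \<in> Delta n c" for i j k
    using assms(2) that root_app_triple[of i n j k "rootT_app n c b"] by (auto simp: Delta_mem)
  have par: "(\<delta> k - \<delta> i - \<delta> j) mod 2 = 0" if "(i,j,k) \<in> Delta n c" for i j k
  proof -
    have "(\<Sum>l<n. root_entry (i,j,k) l * \<delta> l) mod 2 = 0"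
      using assms(4) that unfolding root2_kills_def by blast
    then show ?thesis using root_int_triple[of i n j k \<delta>] that by (simp add: Delta_mem)
  qed
  have d01: "\<delta> i \<in> {0,1}" if "i < n" for i using assms(3) that by auto
  show ?thesis
  proof
    assume "\<exists>g. diag_metric n g \<and> has_signature n g \<delta> \<and> nilsoliton n c g"
    then obtain g where dm: "diag_metric n g" and hs: "has_signature n g \<delta>" and ns: "nilsoliton n c g"
      by blast
    have gnz: "\<forall>i<n. g i \<noteq> 0" using dm by (simp add: diag_metric_def)
    from ns obtain lam D where der: "derivation n c D"
      and ric: "\<forall>l<n. \<forall>m<n. ricop n c g l m = (if l = m then lam else 0) + D l m"
      unfolding nilsoliton_def by blast
    define Y where "Y = Yg c g"
    define d where "d l = rootT_app n c Y l / 2 - lam" for l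
    have Dd: "\<forall>l<n. \<forall>m<n. D l m = (if l = m then d l else 0)"
    proof (intro allI impI)
      fix l m assume lm: "l < n" "m < n"
      have "D l m = ricop n c g l m - (if l = m then lam else 0)" using ric lm by simp
      also have "\<dots> = (if l = m then d l else 0)"
        using ricop_formula[OF nn gnz lm] unfolding d_def Y_def by simp
      finally show "D l m = (if l = m then d l else 0)" .
    qed
    have dd: "\<forall>i<n. \<forall>j<n. \<forall>k<n. d k * c i j k = d i * c i j k + d j * c i j k"
      using der diag_deriv[OF Dd] by blast
    define Z where "Z = (\<lambda>r. Y r + 2 * lam * b r)"
    have "\<forall>r\<in>Delta n c. root_app n (rootT_app n c Z) r = 0"
    proof
      fix r assume r: "r \<in> Delta n c"
      obtain i j k where rr: "r = (i,j,k)" by (cases r) auto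
      have ijk: "i < n" "j < n" "k < n" "c i j k \<noteq> 0" using r rr by (auto simp: Delta_mem)
      have "d k * c i j k = (d i + d j) * c i j k" using dd ijk by (simp add: algebra_simps)
      then have dk: "d k = d i + d j" using ijk(4) by simp
      have rZ: "rootT_app n c Z l = rootT_app n c Y l + 2 * lam * rootT_app n c b l" for l
        unfolding Z_def using rootT_lin[of n c Y "2 * lam" b l] by simp
      have rY: "rootT_app n c Y l = 2 * d l + 2 * lam" for l by (simp add: d_def)
      have "root_app n (rootT_app n c Z) r = rootT_app n c Z k - rootT_app n c Z i - rootT_app n c Z j"
        using rr root_app_triple[OF ijk(1-3)] by simp
      also have "\<dots> = 2 * (d k - d i - d j) - 2 * lam
          + 2 * lam * (rootT_app n c b k - rootT_app n c b i - rootT_app n c b j)"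
        unfolding rZ rY by (simp add: algebra_simps)
      also have "\<dots> = 0" using dk hb[of i j k] r rr by simp
      finally show "root_app n (rootT_app n c Z) r = 0" .
    qed
    then have Z0: "\<forall>l<n. rootT_app n c Z l = 0" by (rule quad)
    have Ypos: "\<forall>r\<in>Delta n c. Y r > 0"
    proof
      fix r assume r: "r \<in> Delta n c"
      obtain i j k where rr: "r = (i,j,k)" by (cases r) auto
      have ijk: "i < n" "j < n" "k < n" "c i j k \<noteq> 0" using r rr by (auto simp: Delta_mem)
      have sgA: "g t > 0" if "t < n" "\<delta> t = 0" for t
      proof (rule ccontr)
        assume "\<not> g t > 0"
        then have "g t < 0" using gnz that(1) by (simp add: not_less le_less)
        then have "\<delta> t = 1" using hs that(1) unfolding has_signature_def by blast
        then show False using that(2) by simp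
      qed
      have sgB: "g t < 0" if "t < n" "\<delta> t = 1" for t
      proof (rule ccontr)
        assume "\<not> g t < 0"
        then have "g t > 0" using gnz that(1) by (simp add: not_less le_less)
        then have "\<delta> t = 0" using hs that(1) unfolding has_signature_def by blast
        then show False using that(2) by simp
      qed
      have "g k / (g i * g j) > 0"
        by (rule sign_ratio[OF d01[OF ijk(1)] d01[OF ijk(2)] d01[OF ijk(3)] par[OF r[unfolded rr]]])
           (auto intro: sgA[OF ijk(1)] sgB[OF ijk(1)] sgA[OF ijk(2)] sgB[OF ijk(2)] sgA[OF ijk(3)] sgB[OF ijk(3)])
      moreover have "(c i j k)^2 > 0" using ijk(4) by simp
      ultimately have pos: "(c i j k)^2 * (g k / (g i * g j)) > 0" by (simp only: mult_pos_pos)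
      have "Y r = (c i j k)^2 * g k / (g i * g j)" unfolding Y_def Yg_def rr by simp
      also have "\<dots> = (c i j k)^2 * (g k / (g i * g j))" by (rule times_divide_eq_right[symmetric])
      finally show "Y r > 0" using pos by simp
    qed
    show "\<exists>(lam::real) (X :: nat \<times> nat \<times> nat \<Rightarrow> real).
            (\<forall>r\<in>Delta n c. X r > 0) \<and>
            (\<forall>l<n. rootT_app n c (\<lambda>r. X r + 2 * lam * b r) l = 0)"
    proof (intro exI[of _ lam] exI[of _ Y] conjI)
      show "\<forall>r\<in>Delta n c. Y r > 0" by (rule Ypos)
      show "\<forall>l<n. rootT_app n c (\<lambda>r. Y r + 2 * lam * b r) l = 0" using Z0 unfolding Z_def .
    qed
  next
    assume "\<exists>(lam::real) (X :: nat \<times> nat \<times> nat \<Rightarrow> real).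
            (\<forall>r\<in>Delta n c. X r > 0) \<and>
            (\<forall>l<n. rootT_app n c (\<lambda>r. X r + 2 * lam * b r) l = 0)"
    then obtain lam X where Xp: "\<forall>r\<in>Delta n c. X r > 0"
      and hX: "\<forall>l<n. rootT_app n c (\<lambda>r. X r + 2 * lam * b r) l = 0" by blast
    define a where "a = (\<lambda>r. case r of (i,j,k) \<Rightarrow> (c i j k)^2)"
    have apos: "\<forall>r\<in>Delta n c. a r > 0" unfolding a_def by (auto simp: Delta_def)
    obtain x where hx: "\<forall>l\<in>{..<n}. (\<Sum>r\<in>Delta n c. of_int (root_entry r l) * (a r * exp (\<Sum>j\<in>{..<n}. of_int (root_entry r j) * x j)))
        = (\<Sum>r\<in>Delta n c. of_int (root_entry r l) * X r)"
      using gen_exist[where A = "\<lambda>r l. of_int (root_entry r l)", OF finite_Delta finite_lessThan apos Xp]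
      by blast
    define s where "s i = (if \<delta> i = 0 then 1 else -1::real)" for i
    define g where "g i = s i * exp (x i)" for i
    have s2: "s i * s i = 1" for i by (simp add: s_def)
    have gnz: "\<forall>i<n. g i \<noteq> 0" by (simp add: g_def s_def)
    define Y where "Y = Yg c g"
    have Yeq: "Y r = a r * exp (root_app n x r)" if r: "r \<in> Delta n c" for r
    proof -
      obtain i j k where rr: "r = (i,j,k)" by (cases r) auto
      have ijk: "i < n" "j < n" "k < n" using r rr by (auto simp: Delta_mem)
      have sk: "s k = s i * s j"
        unfolding s_def by (rule sign_mult[OF d01[OF ijk(1)] d01[OF ijk(2)] d01[OF ijk(3)] par[OF r[unfolded rr]]])
      have snz: "s i * s j \<noteq> 0" by (simp add: s_def)
      have "g k / (g i * g j) = ((s i * s j) * exp (x k)) / ((s i * s j) * (exp (x i) * exp (x j)))"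
        unfolding g_def sk by (simp add: mult_ac)
      also have "\<dots> = exp (x k) / (exp (x i) * exp (x j))"
        by (rule mult_divide_mult_cancel_left[OF snz])
      also have "\<dots> = exp (x k - x i - x j)" by (simp add: exp_diff)
      finally have "g k / (g i * g j) = exp (x k - x i - x j)" .
      note gr = this
      have "Y r = (c i j k)^2 * g k / (g i * g j)" unfolding Y_def Yg_def rr by simp
      also have "\<dots> = (c i j k)^2 * (g k / (g i * g j))" by (rule times_divide_eq_right[symmetric])
      also have "\<dots> = (c i j k)^2 * exp (x k - x i - x j)" by (simp only: gr)
      also have "\<dots> = a r * exp (root_app n x r)" unfolding rr a_def using root_app_triple[OF ijk, of x]
        by simp
      finally show ?thesis .
    qed
    have rYX: "rootT_app n c Y l = rootT_app n c X l" if l: "l < n" for l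
    proof -
      have "rootT_app n c Y l = (\<Sum>r\<in>Delta n c. of_int (root_entry r l) * (a r * exp (\<Sum>j\<in>{..<n}. of_int (root_entry r j) * x j)))"
        unfolding rootT_app_def using Yeq by (intro sum.cong) (auto simp: root_app_def)
      also have "\<dots> = rootT_app n c X l" unfolding rootT_app_def using hx l by simp
      finally show ?thesis .
    qed
    have rX: "rootT_app n c X l = - 2 * lam * rootT_app n c b l" if "l < n" for l
      using hX that rootT_lin[of n c X "2 * lam" b l] by simp
    define d where "d l = rootT_app n c Y l / 2 - lam" for l
    define D where "D l m = ricop n c g l m - (if l = m then lam else 0)" for l m
    have Dd: "\<forall>l<n. \<forall>m<n. D l m = (if l = m then d l else 0)"
      using ricop_formula[OF nn gnz] unfolding D_def d_def Y_def by auto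
    have dD: "d k = d i + d j" if r: "(i,j,k) \<in> Delta n c" for i j k
    proof -
      have ijk: "i < n" "j < n" "k < n" using r by (auto simp: Delta_mem)
      have "d k - d i - d j = (rootT_app n c X k - rootT_app n c X i - rootT_app n c X j) / 2 + lam"
        unfolding d_def using rYX ijk by (simp add: field_simps)
      also have "\<dots> = - lam * (rootT_app n c b k - rootT_app n c b i - rootT_app n c b j) + lam"
        using rX ijk by (simp add: field_simps)
      also have "\<dots> = 0" using hb[OF r] by simp
      finally show ?thesis by simp
    qed
    have anti: "c i j k = - c j i k" if "i < n" "j < n" "k < n" for i j k
      using nn_anti[OF nn that] .
    have "\<forall>i<n. \<forall>j<n. \<forall>k<n. d k * c i j k = d i * c i j k + d j * c i j k"
    proof (intro allI impI)
      fix i j k assume ijk: "i < n" "j < n" "k < n"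
      show "d k * c i j k = d i * c i j k + d j * c i j k"
      proof (cases "c i j k = 0")
        case True then show ?thesis by simp
      next
        case False
        consider "i < j" | "i = j" | "j < i" by arith
        then show ?thesis
        proof cases
          case 1
          then have "(i,j,k) \<in> Delta n c" using ijk False by (simp add: Delta_mem)
          then show ?thesis using dD by (simp add: algebra_simps)
        next
          case 2
          then have "c i j k = 0" using anti[OF ijk(1) ijk(1) ijk(3)] by simp
          then show ?thesis using False by simp
        next
          case 3
          have "c j i k \<noteq> 0" using False anti[OF ijk] by simp
          then have "(j,i,k) \<in> Delta n c" using ijk 3 by (simp add: Delta_mem)
          then show ?thesis using dD by (simp add: algebra_simps)
        qed
      qed
    qed
    then have der: "derivation n c D" using diag_deriv[OF Dd] by blast
    have ns: "nilsoliton n c g"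
      unfolding nilsoliton_def using der by (intro exI[of _ lam] exI[of _ D]) (simp add: D_def)
    have dm: "diag_metric n g" using gnz by (simp add: diag_metric_def)
    have hs: "has_signature n g \<delta>"
      unfolding has_signature_def
    proof (intro allI impI conjI)
      fix i assume i: "i < n"
      show "g i > 0 \<Longrightarrow> \<delta> i = 0" using d01[OF i] by (auto simp: g_def s_def zero_less_mult_iff)
      show "g i < 0 \<Longrightarrow> \<delta> i = 1" using d01[OF i] by (auto simp: g_def s_def mult_less_0_iff)
    qed
    show "\<exists>g. diag_metric n g \<and> has_signature n g \<delta> \<and> nilsoliton n c g"
      using dm hs ns by blast
  qed
qed

end
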